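(* Let $\mathscr D:\mathscr N=\mathscr N_1\cup\cdots\cup\mathscr N_k$ be a $\mathscr C_{\mathscr D}$-decomposition of a chemical reaction network $\mathscr N$ with $d/2<\ell$, where $d=|\mathscr C_{\mathscr D}|$ and $\ell$ is the number of linkage classes of $\mathscr N$. Suppose that each linkage class of $\mathscr N$ either contains no common complex or contains exactly two common complexes which are connected by a unique path. Then $\mathscr D$ is incidence independent.
   Context: A CRN $\mathscr N=(\mathscr S,\mathscr C,\mathscr R)$ is viewed as a directed graph on its complexes with arcs its reactions; paths are paths in the underlying undirected graph and linkage classes are its connected components. A decomposition $\mathscr N=\mathscr N_1\cup\cdots\cup\mathscr N_k$ ($k\ge2$) is given by a partition $\{\mathscr R_1,\dots,\mathscr R_k\}$ of the reaction set; $\mathscr N_i$ has reactions $\mathscr R_i$ and complex set $\mathscr C_i$ consisting of complexes occurring in reactions of $\mathscr R_i$. The set $\mathscr C_{\mathscr D}$ of common complexes consists of the complexes in the complex sets of at least two distinct subnetworks. A $\mathscr C_{\mathscr D}$-decomposition is one with $\mathscr C_i\cap\mathscr C_j=\mathscr C_{\mathscr D}$ for all $i\ne j$. With $n,\ell$ the numbers of complexes and linkage classes of $\mathscr N$ and $n_i,\ell_i$ those of $\mathscr N_i$, the decomposition is incidence independent if the image of the incidence map of $\mathscr N$ (the linear map $\mathbb R^{\mathscr R}\to\mathbb R^{\mathscr C}$ sending $y\to y'$ to $\omega_{y'}-\omega_y$) is the direct sum of the images of the incidence maps of the $\mathscr N_i$, equivalently $n-\ell=\sum_i(n_i-\ell_i)$.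 *)

theory Defs
  imports Complex_Main
begin

text \<open>A reaction network is given by its finite set of reactions, each reaction a pair
  (reactant complex, product complex) with distinct complexes. Species play no role here, so complexes are an abstract type.\<close>

definition crn :: "('c \<times> 'c) set \<Rightarrow> bool" where
  "crn R \<longleftrightarrow> finite R \<and> (\<forall>(y, y') \<in> R. y \<noteq> y')"

definition complexes :: "('c \<times> 'c) set \<Rightarrow> 'c set" where
  "complexes R = fst ` R \<union> snd ` R"

definition linked :: "('c \<times> 'c) set \<Rightarrow> ('c \<times> 'c) set" where
  "linked R = (R \<union> R\<inverse>)\<^sup>* \<inter> (complexes R \<times> complexes R)"

definition linkage_classes :: "('c \<times> 'c) set \<Rightarrow> 'c set set" where
  "linkage_classes R = complexes R // linked R"

definition n_cplx :: "('c \<times> 'c) set \<Rightarrow> nat" where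
  "n_cplx R = card (complexes R)"

definition n_lc :: "('c \<times> 'c) set \<Rightarrow> nat" where
  "n_lc R = card (linkage_classes R)"

text \<open>A path from a to b in the underlying undirected (multi)graph: a list of vertices vs
  (pairwise distinct) and a list of reactions es, the i-th reaction joining vs!i and
  vs!(i+1) in either orientation.\<close>

definition is_path :: "('c \<times> 'c) set \<Rightarrow> 'c list \<times> ('c \<times> 'c) list \<Rightarrow> 'c \<Rightarrow> 'c \<Rightarrow> bool" where
  "is_path R p a b \<longleftrightarrow>
     (let vs = fst p; es = snd p in
        length vs = Suc (length es) \<and> hd vs = a \<and> last vs = b \<and> distinct vs \<and>
        (\<forall>i < length es. es ! i \<in> R \<and>
             (es ! i = (vs ! i, vs ! Suc i) \<or> es ! i = (vs ! Suc i, vs ! i))))"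

definition decomposition :: "('c \<times> 'c) set \<Rightarrow> nat \<Rightarrow> (nat \<Rightarrow> ('c \<times> 'c) set) \<Rightarrow> bool" where
  "decomposition R k Rs \<longleftrightarrow> k \<ge> 2 \<and> (\<forall>i<k. Rs i \<noteq> {}) \<and>
     (\<forall>i<k. \<forall>j<k. i \<noteq> j \<longrightarrow> Rs i \<inter> Rs j = {}) \<and> (\<Union>i<k. Rs i) = R"

definition common_complexes :: "nat \<Rightarrow> (nat \<Rightarrow> ('c \<times> 'c) set) \<Rightarrow> 'c set" where
  "common_complexes k Rs =
     {c. \<exists>i<k. \<exists>j<k. i \<noteq> j \<and> c \<in> complexes (Rs i) \<and> c \<in> complexes (Rs j)}"

definition CD_decomposition :: "('c \<times> 'c) set \<Rightarrow> nat \<Rightarrow> (nat \<Rightarrow> ('c \<times> 'c) set) \<Rightarrow> bool" where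
  "CD_decomposition R k Rs \<longleftrightarrow> decomposition R k Rs \<and>
     (\<forall>i<k. \<forall>j<k. i \<noteq> j \<longrightarrow> complexes (Rs i) \<inter> complexes (Rs j) = common_complexes k Rs)"

text \<open>Incidence map R^R \<rightarrow> R^C sending the reaction y \<rightarrow> y' to \<omega>_y' - \<omega>_y;
  vectors in R^C are represented as functions 'c \<Rightarrow> real (zero outside the complexes).\<close>

definition incidence :: "('c \<times> 'c) set \<Rightarrow> (('c \<times> 'c) \<Rightarrow> real) \<Rightarrow> 'c \<Rightarrow> real" where
  "incidence R a = (\<lambda>z. \<Sum>r\<in>R. a r * ((if snd r = z then 1 else 0) - (if fst r = z then 1 else 0)))"

definition incidence_image :: "('c \<times> 'c) set \<Rightarrow> ('c \<Rightarrow> real) set" where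
  "incidence_image R = range (incidence R)"

definition incidence_independent :: "('c \<times> 'c) set \<Rightarrow> nat \<Rightarrow> (nat \<Rightarrow> ('c \<times> 'c) set) \<Rightarrow> bool" where
  "incidence_independent R k Rs \<longleftrightarrow>
     incidence_image R = {(\<lambda>z. \<Sum>i<k. v i z) | v. \<forall>i<k. v i \<in> incidence_image (Rs i)} \<and>
     (\<forall>v. (\<forall>i<k. v i \<in> incidence_image (Rs i)) \<and> (\<forall>z. (\<Sum>i<k. v i z) = 0) \<longrightarrow> (\<forall>i<k. \<forall>z. v i z = 0))"

end

theory Submission
  imports Defs
begin

lemma incidence_out:
  assumes "z \<notin> complexes S"
  shows "incidence S a z = 0"
  unfolding incidence_def
  by (rule sum.neutral) (use assms in \<open>force simp: complexes_def\<close>)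

lemma cut_lemma:
  fixes R S :: "('c \<times> 'c) set"
  assumes finR: "finite R" and SR: "S \<subseteq> R" and H: "\<forall>z. incidence R a z = 0"
    and finA: "finite A" and cl: "\<forall>r\<in>R. r \<noteq> e \<longrightarrow> (fst r \<in> A \<longleftrightarrow> snd r \<in> A)"
  shows "(\<Sum>y\<in>A. incidence S a y) = 0"
proof -
  define g where "g r = a r * ((if snd r \<in> A then 1 else 0) - (if fst r \<in> A then 1 else 0))" for r
  have sw: "(\<Sum>y\<in>A. incidence T a y) = (\<Sum>r\<in>T. g r)" if "finite T" for T
  proof -
    have "(\<Sum>y\<in>A. incidence T a y) = (\<Sum>r\<in>T. \<Sum>y\<in>A. a r * ((if snd r = y then 1 else 0) - (if fst r = y then 1 else 0)))"
      unfolding incidence_def by (rule sum.swap)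
    also have "\<dots> = (\<Sum>r\<in>T. g r)"
    proof (rule sum.cong)
      fix r
      have "(\<Sum>y\<in>A. a r * ((if snd r = y then 1 else 0) - (if fst r = y then 1 else 0)))
          = a r * ((\<Sum>y\<in>A. (if snd r = y then 1 else 0)) - (\<Sum>y\<in>A. (if fst r = y then 1 else 0)))"
        by (simp add: sum_distrib_left[symmetric] sum_subtractf)
      also have "\<dots> = g r" using finA by (simp add: g_def)
      finally show "(\<Sum>y\<in>A. a r * ((if snd r = y then 1 else 0) - (if fst r = y then 1 else 0))) = g r" .
    qed simp
    finally show ?thesis .
  qed
  have gz: "g r = 0" if "r \<in> R" "r \<noteq> e" for r using cl that by (auto simp: g_def)
  have gs: "(\<Sum>r\<in>T. g r) = (if e \<in> T then g e else 0)" if "T \<subseteq> R" "finite T" for T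
  proof (cases "e \<in> T")
    case True
    then have "(\<Sum>r\<in>T. g r) = g e + (\<Sum>r\<in>T - {e}. g r)" using that by (simp add: sum.remove)
    moreover have "(\<Sum>r\<in>T - {e}. g r) = 0" using that gz by (intro sum.neutral) auto
    ultimately show ?thesis using True by simp
  next
    case False
    have "sum g T = 0" using that gz False by (intro sum.neutral) auto
    then show ?thesis using False by simp
  qed
  have "0 = (\<Sum>y\<in>A. incidence R a y)" using H by simp
  also have "\<dots> = (if e \<in> R then g e else 0)" using sw[OF finR] gs[OF _ finR] by simp
  finally have "e \<in> R \<Longrightarrow> g e = 0" by simp
  moreover have "finite S" using finR SR finite_subset by blast
  ultimately show ?thesis using sw gs SR by auto
qed

lemma path_exists:
  assumes "(x, y) \<in> (S \<union> S\<inverse>)\<^sup>*"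
  shows "\<exists>q. is_path S q x y"
  using assms
proof (induction rule: converse_rtrancl_induct)
  case base
  show ?case by (rule exI[of _ "([y], [])"]) (simp add: is_path_def)
next
  case (step x w)
  then obtain vs es where P: "is_path S (vs, es) w y" by (metis prod.exhaust)
  then have L: "length vs = Suc (length es)" and hd: "hd vs = w" and la: "last vs = y"
    and di: "distinct vs"
    and ed: "\<forall>i < length es. es ! i \<in> S \<and> (es ! i = (vs ! i, vs ! Suc i) \<or> es ! i = (vs ! Suc i, vs ! i))"
    by (auto simp: is_path_def Let_def)
  show ?case
  proof (cases "x \<in> set vs")
    case True
    then obtain j where j: "j < length vs" "vs ! j = x" by (auto simp: in_set_conv_nth)
    have "is_path S (drop j vs, drop j es) x y"
      unfolding is_path_def Let_def fst_conv snd_conv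
    proof (intro conjI)
      show "length (drop j vs) = Suc (length (drop j es))" using L j by simp
      show "hd (drop j vs) = x" using j by (simp add: hd_drop_conv_nth)
      show "last (drop j vs) = y" using j la by simp
      show "distinct (drop j vs)" using di by simp
      show "\<forall>i < length (drop j es). drop j es ! i \<in> S \<and> (drop j es ! i = (drop j vs ! i, drop j vs ! Suc i) \<or>
           drop j es ! i = (drop j vs ! Suc i, drop j vs ! i))"
      proof (intro allI impI)
      fix i assume "i < length (drop j es)"
      then have ji: "j + i < length es" by simp
      have jl: "j \<le> length es" "j \<le> length vs" using ji L by auto
      have "es ! (j+i) \<in> S \<and> (es ! (j+i) = (vs ! (j+i), vs ! Suc (j+i)) \<or> es ! (j+i) = (vs ! Suc (j+i), vs ! (j+i)))"
        using ed ji by blast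
      then show "drop j es ! i \<in> S \<and> (drop j es ! i = (drop j vs ! i, drop j vs ! Suc i) \<or>
           drop j es ! i = (drop j vs ! Suc i, drop j vs ! i))"
        using jl by simp
      qed
    qed
    then show ?thesis by blast
  next
    case False
    define ed0 where "ed0 = (if (x, w) \<in> S then (x, w) else (w, x))"
    have e0: "ed0 \<in> S \<and> (ed0 = (x, w) \<or> ed0 = (w, x))" using step(1) by (auto simp: ed0_def)
    have vs0: "vs ! 0 = w" using hd L by (cases vs) auto
    have "is_path S (x # vs, ed0 # es) x y"
      unfolding is_path_def Let_def fst_conv snd_conv
    proof (intro conjI)
      show "length (x # vs) = Suc (length (ed0 # es))" using L by simp
      show "hd (x # vs) = x" by simp
      show "last (x # vs) = y" using la L by (cases vs) auto
      show "distinct (x # vs)" using di False by simp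
      show "\<forall>i < length (ed0 # es). (ed0 # es) ! i \<in> S \<and> ((ed0 # es) ! i = ((x # vs) ! i, (x # vs) ! Suc i) \<or>
           (ed0 # es) ! i = ((x # vs) ! Suc i, (x # vs) ! i))"
      proof (intro allI impI)
      fix i assume i: "i < length (ed0 # es)"
      show "(ed0 # es) ! i \<in> S \<and> ((ed0 # es) ! i = ((x # vs) ! i, (x # vs) ! Suc i) \<or>
           (ed0 # es) ! i = ((x # vs) ! Suc i, (x # vs) ! i))"
      proof (cases i)
        case 0 then show ?thesis using e0 vs0 by simp
      next
        case (Suc i') then show ?thesis using ed i by simp
      qed
      qed
    qed
    then show ?thesis by blast
  qed
qed

lemma is_path_mono: "is_path S q x y \<Longrightarrow> S \<subseteq> T \<Longrightarrow> is_path T q x y"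
  unfolding is_path_def Let_def by blast

lemma is_path_edges: "is_path S q x y \<Longrightarrow> set (snd q) \<subseteq> S"
  unfolding is_path_def Let_def by (auto simp: in_set_conv_nth) metis

lemma is_path_nonempty: "is_path S q x y \<Longrightarrow> x \<noteq> y \<Longrightarrow> snd q \<noteq> []"
  unfolding is_path_def Let_def by (cases "fst q") auto

lemma reach_cplx:
  assumes "(x, y) \<in> (R \<union> R\<inverse>)\<^sup>*"
  shows "x = y \<or> y \<in> complexes R"
  using assms
proof (induction rule: rtrancl_induct)
  case base then show ?case by simp
next
  case (step y z) then show ?case by (force simp: complexes_def)
qed

theorem proposition8:
  fixes R :: "('c \<times> 'c) set" and k :: nat and Rs :: "nat \<Rightarrow> ('c \<times> 'c) set"
  assumes "crn R"
    and "CD_decomposition R k Rs"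
    and "real (card (common_complexes k Rs)) / 2 < real (n_lc R)"
    and "\<forall>L \<in> linkage_classes R.
           L \<inter> common_complexes k Rs = {} \<or>
           (\<exists>a b. a \<noteq> b \<and> L \<inter> common_complexes k Rs = {a, b} \<and>
                  (\<exists>!p. is_path R p a b))"
  shows "incidence_independent R k Rs"
proof -
  let ?CC = "common_complexes k Rs"
  from assms(1) have fin: "finite R" by (simp add: crn_def)
  from assms(2) have dec: "decomposition R k Rs" by (simp add: CD_decomposition_def)
  have sub: "Rs i \<subseteq> R" if "i < k" for i using dec that by (auto simp: decomposition_def)
  have finRs: "finite (Rs i)" if "i < k" for i using sub[OF that] fin finite_subset by blast
  have disj: "Rs i \<inter> Rs j = {}" if "i < k" "j < k" "i \<noteq> j" for i j
    using dec that by (auto simp: decomposition_def)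
  have Req: "R = (\<Union>i\<in>{..<k}. Rs i)" using dec by (auto simp: decomposition_def)
  have union: "incidence R a z = (\<Sum>i<k. incidence (Rs i) a z)" for a z
  proof -
    have "incidence R a z = (\<Sum>r\<in>(\<Union>i\<in>{..<k}. Rs i). a r * ((if snd r = z then 1 else 0) - (if fst r = z then 1 else 0)))"
      unfolding incidence_def using Req by simp
    also have "\<dots> = (\<Sum>i<k. incidence (Rs i) a z)"
      unfolding incidence_def using finRs disj by (subst sum.UNION_disjoint) auto
    finally show ?thesis .
  qed
  define glue where "glue as = (\<lambda>r. \<Sum>i<k. if r \<in> Rs i then as i r else (0::real))"
    for as :: "nat \<Rightarrow> ('c \<times> 'c) \<Rightarrow> real"
  have glue_val: "glue as r = as i r" if gi: "i < k" "r \<in> Rs i" for as i r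
  proof -
    have "glue as r = (\<Sum>j\<in>{..<k}. if r \<in> Rs j then as j r else 0)" by (simp add: glue_def)
    also have "\<dots> = (if r \<in> Rs i then as i r else 0) + (\<Sum>j\<in>{..<k} - {i}. if r \<in> Rs j then as j r else 0)"
      by (rule sum.remove) (use gi in auto)
    also have "(\<Sum>j\<in>{..<k} - {i}. if r \<in> Rs j then as j r else 0) = 0"
    proof (rule sum.neutral, rule ballI)
      fix j assume j: "j \<in> {..<k} - {i}"
      then have "r \<notin> Rs j" using disj[of i j] gi by auto
      then show "(if r \<in> Rs j then as j r else 0) = 0" by simp
    qed
    finally show ?thesis using gi by simp
  qed
  have glue_eq: "incidence (Rs i) (glue as) = incidence (Rs i) (as i)" if gi: "i < k" for as i
  proof
    fix z
    show "incidence (Rs i) (glue as) z = incidence (Rs i) (as i) z"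
      unfolding incidence_def
    proof (rule sum.cong)
      fix r assume "r \<in> Rs i"
      then have "glue as r = as i r" using glue_val gi by blast
      then show "glue as r * ((if snd r = z then 1 else 0) - (if fst r = z then 1 else 0)) =
        as i r * ((if snd r = z then 1 else 0) - (if fst r = z then 1 else 0))" by simp
    qed simp
  qed
  have glue_eq: "incidence (Rs i) (glue as) = incidence (Rs i) (as i)" if "i < k" for as i
    unfolding incidence_def using glue_val[OF that] by (intro ext sum.cong) auto
  have key: "incidence (Rs i) a z = 0" if H: "\<forall>z. incidence R a z = 0" and ik: "i < k" for a i z
  proof -
    have noncommon: "incidence (Rs i) a y = 0" if "y \<notin> ?CC" for y
    proof (cases "y \<in> complexes (Rs i)")
      case False then show ?thesis by (rule incidence_out)
    next
      case True
      have oth: "incidence (Rs j) a y = 0" if "j \<in> {..<k} - {i}" for j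
      proof (rule incidence_out)
        show "y \<notin> complexes (Rs j)" using that True ik \<open>y \<notin> ?CC\<close>
          unfolding common_complexes_def by blast
      qed
      have "0 = incidence R a y" using H by simp
      also have "\<dots> = incidence (Rs i) a y + (\<Sum>j\<in>{..<k} - {i}. incidence (Rs j) a y)"
        using union ik by (simp add: sum.remove)
      also have "(\<Sum>j\<in>{..<k} - {i}. incidence (Rs j) a y) = 0" using oth by simp
      finally show ?thesis by simp
    qed
    have pair: "incidence (Rs i) a a0 = 0 \<and> incidence (Rs i) a b = 0"
      if L: "L \<in> linkage_classes R" and ab: "a0 \<noteq> b" and LC: "L \<inter> ?CC = {a0, b}"
        and uq: "\<exists>!p. is_path R p a0 b" for L a0 b
    proof -
      from L obtain c where c: "c \<in> complexes R" and Ldef: "L = linked R `` {c}"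
        unfolding linkage_classes_def by (metis quotientE)
      have a0L: "a0 \<in> L" using LC by blast
      have bL: "b \<in> L" using LC by blast
      have Lmem: "y \<in> L \<longleftrightarrow> (c, y) \<in> (R \<union> R\<inverse>)\<^sup>* \<and> y \<in> complexes R" for y
        unfolding Ldef linked_def using c by simp
      have finC: "finite (complexes R)" using fin by (simp add: complexes_def)
      have finL: "finite L" using finC Lmem by (meson finite_subset subsetI)
      have Lcl: "fst r \<in> L \<longleftrightarrow> snd r \<in> L" if rR: "r \<in> R" for r
      proof -
        obtain u v where r: "r = (u, v)" by (cases r)
        have uv: "(u, v) \<in> R" using rR r by simp
        have rc: "u \<in> complexes R" "v \<in> complexes R" using uv unfolding complexes_def by force+
        have s1: "(u, v) \<in> (R \<union> R\<inverse>)\<^sup>*" by (rule r_into_rtrancl) (simp add: uv)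
        have s2: "(v, u) \<in> (R \<union> R\<inverse>)\<^sup>*" by (rule r_into_rtrancl) (simp add: uv)
        have "(c, u) \<in> (R \<union> R\<inverse>)\<^sup>* \<longleftrightarrow> (c, v) \<in> (R \<union> R\<inverse>)\<^sup>*"
          using rtrancl_trans[OF _ s1, of c] rtrancl_trans[OF _ s2, of c] by blast
        then show ?thesis using Lmem rc r by simp
      qed
      from uq obtain p where p: "is_path R p a0 b" and puq: "\<And>q. is_path R q a0 b \<Longrightarrow> q = p"
        by (elim ex1E) blast
      from is_path_nonempty[OF p ab] obtain e where e: "e \<in> set (snd p)"
        by (cases "snd p") auto
      define R' where "R' = R - {e}"
      define A where "A = {y. (a0, y) \<in> (R' \<union> R'\<inverse>)\<^sup>*}"
      have a0c: "(c, a0) \<in> (R \<union> R\<inverse>)\<^sup>*" "a0 \<in> complexes R" using a0L Lmem by auto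
      have AL: "A \<subseteq> L"
      proof
        fix y assume "y \<in> A"
        then have y: "(a0, y) \<in> (R' \<union> R'\<inverse>)\<^sup>*" by (simp add: A_def)
        have sR: "R' \<union> R'\<inverse> \<subseteq> R \<union> R\<inverse>" by (auto simp: R'_def)
        have "(a0, y) \<in> (R \<union> R\<inverse>)\<^sup>*" using rtrancl_mono[OF sR] y by blast
        then have "(c, y) \<in> (R \<union> R\<inverse>)\<^sup>*" by (rule rtrancl_trans[OF a0c(1)])
        moreover have "y \<in> complexes R"
        proof -
          from reach_cplx[OF y] have "y = a0 \<or> y \<in> complexes R'" by auto
          then show ?thesis using a0c by (auto simp: complexes_def R'_def)
        qed
        ultimately show "y \<in> L" using Lmem by simp
      qed
      have finA: "finite A" using AL finL finite_subset by blast
      have Acl: "\<forall>r\<in>R. r \<noteq> e \<longrightarrow> (fst r \<in> A \<longleftrightarrow> snd r \<in> A)"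
      proof (intro ballI impI)
        fix r assume r: "r \<in> R" "r \<noteq> e"
        then have "(fst r, snd r) \<in> R' \<union> R'\<inverse>" "(snd r, fst r) \<in> R' \<union> R'\<inverse>" by (auto simp: R'_def)
        then show "fst r \<in> A \<longleftrightarrow> snd r \<in> A" unfolding A_def
          using rtrancl_into_rtrancl[of a0 "fst r" "R' \<union> R'\<inverse>" "snd r"]
            rtrancl_into_rtrancl[of a0 "snd r" "R' \<union> R'\<inverse>" "fst r"] by blast
      qed
      have bA: "b \<notin> A"
      proof
        assume "b \<in> A"
        then have "(a0, b) \<in> (R' \<union> R'\<inverse>)\<^sup>*" by (simp add: A_def)
        then have "\<exists>q. is_path R' q a0 b" by (rule path_exists)
        then obtain q where q: "is_path R' q a0 b" by (elim exE)
        have "is_path R q a0 b" using q by (rule is_path_mono) (auto simp: R'_def)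
        then have "q = p" by (rule puq)
        moreover have "e \<notin> set (snd q)" using is_path_edges[OF q] by (auto simp: R'_def)
        ultimately show False using e by simp
      qed
      have a0A: "a0 \<in> A" by (simp add: A_def)
      have "0 = (\<Sum>y\<in>A. incidence (Rs i) a y)" using cut_lemma[OF fin sub[OF ik] H finA Acl] by simp
      also have "\<dots> = incidence (Rs i) a a0 + (\<Sum>y\<in>A - {a0}. incidence (Rs i) a y)"
        using finA a0A by (simp add: sum.remove)
      also have "(\<Sum>y\<in>A - {a0}. incidence (Rs i) a y) = 0"
      proof (rule sum.neutral, intro ballI)
        fix y assume y: "y \<in> A - {a0}"
        have "y \<notin> ?CC" using y AL LC bA by blast
        then show "incidence (Rs i) a y = 0" by (rule noncommon)
      qed
      finally have za: "incidence (Rs i) a a0 = 0" by simp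
      have "0 = (\<Sum>y\<in>L. incidence (Rs i) a y)"
        using cut_lemma[OF fin sub[OF ik] H finL, of e] Lcl by simp
      also have "\<dots> = incidence (Rs i) a a0 + (\<Sum>y\<in>L - {a0}. incidence (Rs i) a y)"
        using finL a0L by (simp add: sum.remove)
      also have "(\<Sum>y\<in>L - {a0}. incidence (Rs i) a y) = incidence (Rs i) a b + (\<Sum>y\<in>L - {a0} - {b}. incidence (Rs i) a y)"
        using finL bL ab by (intro sum.remove) auto
      also have "(\<Sum>y\<in>L - {a0} - {b}. incidence (Rs i) a y) = 0"
      proof (rule sum.neutral, intro ballI)
        fix y assume y: "y \<in> L - {a0} - {b}"
        have "y \<notin> ?CC" using y LC by blast
        then show "incidence (Rs i) a y = 0" by (rule noncommon)
      qed
      finally show ?thesis using za by simp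
    qed
    show ?thesis
    proof (cases "z \<in> ?CC")
      case False then show ?thesis by (rule noncommon)
    next
      case True
      then have zc: "z \<in> complexes (Rs i)" unfolding common_complexes_def using assms(2) ik
        unfolding CD_decomposition_def by blast
      have zR: "z \<in> complexes R" using zc sub[OF ik] by (auto simp: complexes_def)
      define L where "L = linked R `` {z}"
      have L: "L \<in> linkage_classes R" unfolding L_def linkage_classes_def using zR by (rule quotientI)
      have zL: "z \<in> L" unfolding L_def linked_def using zR by auto
      with True have "L \<inter> ?CC \<noteq> {}" by blast
      have "L \<inter> ?CC = {} \<or> (\<exists>a b. a \<noteq> b \<and> L \<inter> ?CC = {a, b} \<and> (\<exists>!p. is_path R p a b))"
        using assms(4) L by (rule bspec)
      with \<open>L \<inter> ?CC \<noteq> {}\<close> obtain a0 b where ab: "a0 \<noteq> b" "L \<inter> ?CC = {a0, b}" "\<exists>!p. is_path R p a0 b"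
        by (elim disjE exE conjE) auto
      have zab: "z = a0 \<or> z = b" using zL True ab(2) by blast
      have "incidence (Rs i) a a0 = 0 \<and> incidence (Rs i) a b = 0" by (rule pair[OF L ab])
      then show ?thesis using zab by auto
    qed
  qed
  have choose: "\<exists>as. \<forall>i<k. v i = incidence (Rs i) (as i)"
    if "\<forall>i<k. v i \<in> incidence_image (Rs i)" for v
  proof -
    have ex: "\<exists>a. v i = incidence (Rs i) a" if "i < k" for i
      using \<open>\<forall>i<k. v i \<in> incidence_image (Rs i)\<close> that unfolding incidence_image_def by auto
    have "\<forall>i<k. v i = incidence (Rs i) ((\<lambda>i. SOME a. v i = incidence (Rs i) a) i)"
    proof (intro allI impI)
      fix i assume "i < k"
      from someI_ex[OF ex[OF this]] show "v i = incidence (Rs i) ((\<lambda>i. SOME a. v i = incidence (Rs i) a) i)" by simp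
    qed
    then show ?thesis by (rule exI[where x="\<lambda>i. SOME a. v i = incidence (Rs i) a"])
  qed
  have glue_sum: "incidence R (glue as) z = (\<Sum>i<k. incidence (Rs i) (as i) z)" for as z
  proof -
    have "incidence R (glue as) z = (\<Sum>i<k. incidence (Rs i) (glue as) z)" by (rule union)
    also have "\<dots> = (\<Sum>i<k. incidence (Rs i) (as i) z)"
      by (rule sum.cong) (simp_all add: glue_eq)
    finally show ?thesis .
  qed
  have P1: "incidence_image R = {\<lambda>z. \<Sum>i<k. v i z |v. \<forall>i<k. v i \<in> incidence_image (Rs i)}"
  proof (intro equalityI subsetI)
    fix x assume "x \<in> incidence_image R"
    then obtain a where xa: "x = incidence R a" by (auto simp: incidence_image_def)
    have "x = (\<lambda>z. \<Sum>i<k. incidence (Rs i) a z)" unfolding xa using union by (intro ext) 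
    moreover have "\<forall>i<k. incidence (Rs i) a \<in> incidence_image (Rs i)" by (simp add: incidence_image_def)
    ultimately show "x \<in> {\<lambda>z. \<Sum>i<k. v i z |v. \<forall>i<k. v i \<in> incidence_image (Rs i)}"
      by (intro CollectI exI[of _ "\<lambda>i. incidence (Rs i) a"] conjI)
  next
    fix x assume "x \<in> {\<lambda>z. \<Sum>i<k. v i z |v. \<forall>i<k. v i \<in> incidence_image (Rs i)}"
    then obtain v where x: "x = (\<lambda>z. \<Sum>i<k. v i z)" and v: "\<forall>i<k. v i \<in> incidence_image (Rs i)" by blast
    from choose[OF v] obtain as where as: "\<forall>i<k. v i = incidence (Rs i) (as i)" by blast
    have "x = incidence R (glue as)"
    proof
      fix z show "x z = incidence R (glue as) z"
        unfolding x glue_sum using as by (intro sum.cong) auto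
    qed
    then show "x \<in> incidence_image R" by (simp add: incidence_image_def)
  qed
  have P2: "\<forall>i<k. \<forall>z. v i z = 0"
    if A: "(\<forall>i<k. v i \<in> incidence_image (Rs i)) \<and> (\<forall>z. (\<Sum>i<k. v i z) = 0)" for v
  proof (intro allI impI)
    fix i z assume ik: "i < k"
    from A have "\<forall>i<k. v i \<in> incidence_image (Rs i)" by blast
    from choose[OF this] obtain as where as: "\<forall>i<k. v i = incidence (Rs i) (as i)" by blast
    have "\<forall>z. incidence R (glue as) z = 0"
    proof
      fix z
      have "incidence R (glue as) z = (\<Sum>i<k. v i z)"
        unfolding glue_sum using as by (intro sum.cong) auto
      then show "incidence R (glue as) z = 0" using A by simp
    qed
    then have "incidence (Rs i) (glue as) z = 0" using key ik by blast
    then show "v i z = 0" using as ik glue_eq[OF ik] by simp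
  qed
  show ?thesis unfolding incidence_independent_def using P1 P2 by blast
qed

end
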